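(* Let $f=z^4+f_2z^2+f_3z+f_4\in\mathbb{R}[x,y,z]$ with $f_j\in\mathbb{R}[x,y]$ homogeneous of degree $j$, such that $f$ is strictly positive definite and $f-z^4$ is psd. Assume that $f_2$ is not a square, $f_2\nmid f_3$, and $4f_2f_4-f_3^2$ is square-free. Let $\xi_0,\eta_0\in\mathbb{R}[x,y]$ be forms of degrees $2$ and $3$ with $\eta_0^2+f_2\xi_0^2=4f_2f_4-f_3^2$. Then there exist $\epsilon>0$ and families of binary forms $\xi^{(t)}$ of degree $2$ and $\eta^{(t)}$ of degree $3$, depending continuously on $t\in(-\epsilon,\epsilon)$, with $(\xi^{(0)},\eta^{(0)})=(\xi_0,\eta_0)$, such that for all $|t|<\epsilon$: $(\eta^{(t)})^2+f_3^2=(f_2-t\xi^{(t)})(4f_4-(\xi^{(t)})^2)$, and $f_2-t\xi^{(t)}$ and $4f_4-(\xi^{(t)})^2$ are psd.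
   Context: psd: taking only nonnegative values on real points; strictly positive definite: taking positive values at all nonzero real points. Continuity refers to the coefficients of the forms. *)

theory Defs
  imports "HOL-Analysis.Analysis" "HOL-Computational_Algebra.Computational_Algebra"
begin

text \<open>Bivariate real polynomials R[x,y] are represented as real poly poly = (R[x])[y]:
  the outer variable is y, the coefficients are polynomials in x.\<close>

type_synonym bipoly = "real poly poly"

definition ev2 :: "bipoly \<Rightarrow> real \<Rightarrow> real \<Rightarrow> real" where
  "ev2 p x y = poly (poly p [:y:]) x"

definition bcoeff :: "bipoly \<Rightarrow> nat \<Rightarrow> nat \<Rightarrow> real" where
  "bcoeff p k i = coeff (coeff p i) k"

definition form_of_deg :: "nat \<Rightarrow> bipoly \<Rightarrow> bool" where
  "form_of_deg j p \<longleftrightarrow> (\<forall>k i. bcoeff p k i \<noteq> 0 \<longrightarrow> k + i = j)"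

definition psd2 :: "bipoly \<Rightarrow> bool" where
  "psd2 p \<longleftrightarrow> (\<forall>x y. ev2 p x y \<ge> 0)"

definition bconst :: "real \<Rightarrow> bipoly" where
  "bconst c = [:[:c:]:]"

definition evf :: "bipoly \<Rightarrow> bipoly \<Rightarrow> bipoly \<Rightarrow> real \<Rightarrow> real \<Rightarrow> real \<Rightarrow> real" where
  "evf f2 f3 f4 x y z = z^4 + ev2 f2 x y * z^2 + ev2 f3 x y * z + ev2 f4 x y"

end

theory Submission
  imports Defs "HOL-Computational_Algebra.Field_as_Ring"
begin


lemma ev2_add[simp]: "ev2 (p+q) x y = ev2 p x y + ev2 q x y" by (simp add: ev2_def)
lemma ev2_diff[simp]: "ev2 (p-q) x y = ev2 p x y - ev2 q x y" by (simp add: ev2_def)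
lemma ev2_minus[simp]: "ev2 (-p) x y = - ev2 p x y" by (simp add: ev2_def)
lemma ev2_mult[simp]: "ev2 (p*q) x y = ev2 p x y * ev2 q x y" by (simp add: ev2_def)
lemma ev2_power[simp]: "ev2 (p^n) x y = ev2 p x y ^ n" by (induct n) (simp_all add: ev2_def)
lemma ev2_bconst[simp]: "ev2 (bconst c) x y = c" by (simp add: ev2_def bconst_def)
lemma ev2_0[simp]: "ev2 0 x y = 0" by (simp add: ev2_def)

lemma ev2_sum: "ev2 p x y = (\<Sum>i\<le>degree p. poly (coeff p i) x * y^i)"
proof -
  have "poly p [:y:] = (\<Sum>i\<le>degree p. coeff p i * [:y:]^i)" by (rule poly_altdef)
  then show ?thesis unfolding ev2_def by (simp add: poly_sum poly_power)
qed

lemma ev2_sum_le: assumes "degree p \<le> n" shows "ev2 p x y = (\<Sum>i\<le>n. poly (coeff p i) x * y^i)"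
proof -
  have "(\<Sum>i\<le>n. poly (coeff p i) x * y^i) = (\<Sum>i\<le>degree p. poly (coeff p i) x * y^i)"
    by (rule sum.mono_neutral_right) (use assms in \<open>auto simp: coeff_eq_0\<close>)
  then show ?thesis by (simp add: ev2_sum)
qed

lemma ev2_map: "ev2 p x y = poly (map_poly (\<lambda>c. poly c x) p) y"
proof (induct p rule: pCons_induct)
  case 0 then show ?case by simp
next
  case (pCons a p)
  then show ?case by (simp add: ev2_def map_poly_pCons)
qed

lemma ev2_nonzero: assumes "p \<noteq> 0" shows "\<exists>x y. ev2 p x y \<noteq> 0"
proof -
  obtain i where i: "coeff p i \<noteq> 0" using assms by (metis leading_coeff_0_iff)
  then obtain x where x: "poly (coeff p i) x \<noteq> 0" using poly_all_0_iff_0 by blast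
  let ?q = "map_poly (\<lambda>c. poly c x) p"
  have "coeff ?q i \<noteq> 0" using x by (simp add: coeff_map_poly)
  then have "?q \<noteq> 0" by auto
  then obtain y where "poly ?q y \<noteq> 0" using poly_all_0_iff_0 by blast
  then show ?thesis by (auto simp: ev2_map)
qed

lemma ev2_inj: assumes "\<And>x y. ev2 p x y = ev2 q x y" shows "p = q"
proof (rule ccontr)
  assume "p \<noteq> q" then have "p - q \<noteq> 0" by simp
  then show False using ev2_nonzero[of "p - q"] assms by auto
qed



lemma form_coeff: assumes "form_of_deg j p"
  shows "coeff p i = (if i \<le> j then monom (bcoeff p (j-i) i) (j-i) else 0)"
proof (rule poly_eqI)
  fix k
  have h: "coeff (coeff p i) k \<noteq> 0 \<Longrightarrow> k + i = j" using assms by (auto simp: form_of_deg_def bcoeff_def)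
  show "coeff (coeff p i) k = coeff (if i \<le> j then monom (bcoeff p (j - i) i) (j - i) else 0) k"
    using h by (cases "coeff (coeff p i) k = 0") (auto simp: coeff_monom bcoeff_def)
qed

lemma form_degree: assumes "form_of_deg j p" shows "degree p \<le> j"
  by (rule degree_le) (simp add: form_coeff[OF assms])

lemma form_ev: assumes "form_of_deg j p"
  shows "ev2 p x y = (\<Sum>i\<le>j. bcoeff p (j-i) i * x^(j-i) * y^i)"
  by (subst ev2_sum_le[OF form_degree[OF assms]]) (simp add: form_coeff[OF assms] poly_monom)

lemma form_homog: assumes "form_of_deg j p"
  shows "ev2 p (s*x) (s*y) = s^j * ev2 p x y"
proof -
  have "\<And>i. i \<in> {..j} \<Longrightarrow> bcoeff p (j-i) i * (s*x)^(j-i) * (s*y)^i = s^j * (bcoeff p (j-i) i * x^(j-i) * y^i)"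
  proof -
    fix i assume "i \<in> {..j}"
    then have "s^j = s^(j-i) * s^i" by (simp add: power_add[symmetric])
    then show "bcoeff p (j-i) i * (s*x)^(j-i) * (s*y)^i = s^j * (bcoeff p (j-i) i * x^(j-i) * y^i)"
      by (simp add: power_mult_distrib)
  qed
  then show ?thesis unfolding form_ev[OF assms] sum_distrib_left by (rule sum.cong[OF refl])
qed

lemma form_zero: assumes "form_of_deg j p" and "\<And>i. i \<le> j \<Longrightarrow> ev2 p 1 (real i) = 0"
  shows "p = 0"
proof -
  define q :: "real poly" where "q = (\<Sum>i\<le>j. monom (bcoeff p (j-i) i) i)"
  have cq: "coeff q i = (if i \<le> j then bcoeff p (j-i) i else 0)" for i
    by (simp add: q_def coeff_sum coeff_monom)
  have pq: "poly q y = ev2 p 1 y" for y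
    by (simp add: q_def poly_sum poly_monom form_ev[OF assms(1)])
  have dq: "degree q \<le> j" by (rule degree_le) (simp add: cq)
  have "q = 0"
  proof (rule ccontr)
    assume "q \<noteq> 0"
    have "real ` {..j} \<subseteq> {x. poly q x = 0}" using assms(2) pq by auto
    then have "card (real ` {..j}) \<le> card {x. poly q x = 0}"
      by (intro card_mono poly_roots_finite \<open>q \<noteq> 0\<close>)
    also have "\<dots> \<le> degree q" by (rule card_poly_roots_bound[OF \<open>q \<noteq> 0\<close>])
    finally have "card (real ` {..j}) \<le> j" using dq by simp
    moreover have "card (real ` {..j}) = Suc j" by (subst card_image) (auto simp: inj_on_def)
    ultimately show False by simp
  qed
  then have z: "i \<le> j \<Longrightarrow> bcoeff p (j-i) i = 0" for i using cq[of i] by simp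
  show "p = 0"
  proof (rule poly_eqI)
    fix i show "coeff p i = coeff 0 i" using z[of i] by (simp add: form_coeff[OF assms(1)])
  qed
qed

lemma bcoeff_mult: "bcoeff (p*q) k i = (\<Sum>i1\<le>i. \<Sum>k1\<le>k. bcoeff p k1 i1 * bcoeff q (k-k1) (i-i1))"
  by (simp add: bcoeff_def coeff_mult coeff_sum)

lemma form_mult: assumes "form_of_deg m p" "form_of_deg n q" shows "form_of_deg (m+n) (p*q)"
  unfolding form_of_deg_def
proof (intro allI impI)
  fix k i assume ne: "bcoeff (p*q) k i \<noteq> 0"
  show "k + i = m + n"
  proof (rule ccontr)
    assume a: "k + i \<noteq> m + n"
    have "bcoeff (p*q) k i = 0" unfolding bcoeff_mult
    proof (intro sum.neutral ballI)
      fix i1 k1 assume "i1 \<in> {..i}" "k1 \<in> {..k}"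
      then have le: "i1 \<le> i" "k1 \<le> k" by auto
      show "bcoeff p k1 i1 * bcoeff q (k-k1) (i-i1) = 0"
      proof (cases "bcoeff p k1 i1 = 0")
        case False
        then have "k1 + i1 = m" using assms(1) unfolding form_of_deg_def by blast
        then have "(k-k1) + (i-i1) \<noteq> n" using a le by linarith
        then have "bcoeff q (k-k1) (i-i1) = 0" using assms(2) unfolding form_of_deg_def by blast
        then show ?thesis by simp
      qed simp
    qed
    with ne show False by simp
  qed
qed

lemma form_add: assumes "form_of_deg j p" "form_of_deg j q" shows "form_of_deg j (p+q)"
  unfolding form_of_deg_def
proof (intro allI impI)
  fix k i assume "bcoeff (p + q) k i \<noteq> 0"
  then show "k + i = j" using assms unfolding form_of_deg_def bcoeff_def
    by (cases "coeff (coeff p i) k = 0") auto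
qed
lemma form_diff: assumes "form_of_deg j p" "form_of_deg j q" shows "form_of_deg j (p-q)"
  unfolding form_of_deg_def
proof (intro allI impI)
  fix k i assume "bcoeff (p - q) k i \<noteq> 0"
  then show "k + i = j" using assms unfolding form_of_deg_def bcoeff_def
    by (cases "coeff (coeff p i) k = 0") auto
qed
lemma form_bconst: "form_of_deg 0 (bconst c)"
  by (auto simp: form_of_deg_def bcoeff_def bconst_def coeff_pCons split: nat.splits)
lemma form_sq: "form_of_deg j p \<Longrightarrow> form_of_deg (j+j) (p^2)"
  by (simp add: power2_eq_square form_mult)
lemma form_scale: "form_of_deg j p \<Longrightarrow> form_of_deg j (bconst c * p)"
  using form_mult[OF form_bconst] by fastforce

definition mkf :: "nat \<Rightarrow> (nat \<Rightarrow> real) \<Rightarrow> bipoly" where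
  "mkf j c = (\<Sum>i\<le>j. monom (monom (c i) (j-i)) i)"

lemma coeff_mkf: "coeff (mkf j c) i = (if i \<le> j then monom (c i) (j-i) else 0)"
  unfolding mkf_def coeff_sum coeff_monom by (simp add: sum.delta)

lemma bcoeff_mkf: "bcoeff (mkf j c) k i = (if i \<le> j \<and> k = j - i then c i else 0)"
  by (auto simp: bcoeff_def coeff_mkf coeff_monom)

lemma form_mkf: "form_of_deg j (mkf j c)"
  unfolding form_of_deg_def bcoeff_mkf by auto

lemma ev2_mkf: "ev2 (mkf j c) x y = (\<Sum>i\<le>j. c i * x^(j-i) * y^i)"
  unfolding form_ev[OF form_mkf] bcoeff_mkf by simp

lemma mkf_form: assumes "form_of_deg j p" shows "mkf j (\<lambda>i. bcoeff p (j-i) i) = p"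
  by (rule poly_eqI) (simp add: coeff_mkf form_coeff[OF assms])

lemma mkf_cong: "(\<And>i. i \<le> j \<Longrightarrow> c i = d i) \<Longrightarrow> mkf j c = mkf j d"
  unfolding mkf_def by (rule sum.cong) auto



lemma ev2_cont: "continuous_on S (\<lambda>s::real. ev2 r (s*x) (s*y))"
  unfolding ev2_sum by (intro continuous_intros)

lemma form_dvd_zero: assumes "form_of_deg m A" "form_of_deg n P" "m < n" "P \<noteq> 0" "P dvd A"
  shows "A = 0"
proof (rule ccontr)
  assume "A \<noteq> 0"
  with assms have "P * A \<noteq> 0" by simp
  then obtain x y where "ev2 (P*A) x y \<noteq> 0" using ev2_nonzero by blast
  then have Pn: "ev2 P x y \<noteq> 0" and An: "ev2 A x y \<noteq> 0" by auto
  obtain r where r: "A = P * r" using assms(5) by blast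
  define h where "h s = s^(n-m) * ev2 r (s*x) (s*y)" for s :: real
  have "continuous_on UNIV h" unfolding h_def by (intro continuous_intros ev2_cont)
  then have t1: "(h \<longlongrightarrow> h 0) (at 0)" by (simp add: continuous_on_def)
  have h0: "h 0 = 0" using assms(3) by (simp add: h_def)
  have "\<forall>\<^sub>F s in at 0. h s = ev2 A x y / ev2 P x y"
    unfolding eventually_at
  proof (intro exI[of _ 1] conjI ballI impI)
      fix s :: real assume "s \<noteq> 0 \<and> dist s 0 < 1"
      then have s: "s \<noteq> 0" by simp
      have e2: "ev2 A (s*x) (s*y) = ev2 P (s*x) (s*y) * ev2 r (s*x) (s*y)" using r by simp
      have "s^m * ev2 A x y = s^n * ev2 P x y * ev2 r (s*x) (s*y)"
        using form_homog[OF assms(1), of s x y] form_homog[OF assms(2), of s x y] e2 by simp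
      moreover have "s^n = s^m * s^(n-m)" using assms(3) by (simp add: power_add[symmetric])
      ultimately have "ev2 A x y = ev2 P x y * h s" using s by (simp add: h_def)
      then show "h s = ev2 A x y / ev2 P x y" using Pn by (simp add: field_simps)
  qed simp
  then have t2: "(h \<longlongrightarrow> ev2 A x y / ev2 P x y) (at 0)" by (rule tendsto_eventually)
  have "h 0 = ev2 A x y / ev2 P x y" by (rule tendsto_unique[OF _ t1 t2]) simp
  then show False using An Pn h0 by simp
qed



lemma sum2: "(\<Sum>i\<le>(2::nat). f i) = f 0 + f 1 + (f 2 :: real)"
  by (simp add: eval_nat_numeral atMost_Suc)
lemma sum1: "(\<Sum>i\<le>(1::nat). f i) = f 0 + (f 1 :: real)"
  by (simp add: eval_nat_numeral atMost_Suc)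
lemma sum3: "(\<Sum>i\<le>(3::nat). f i) = f 0 + f 1 + f 2 + (f 3 :: real)"
  by (simp add: eval_nat_numeral atMost_Suc)

lemma quad_lead_nonneg:
  fixes A B C :: real
  assumes "\<forall>z. A*z^2 + B*z + C \<ge> 0" shows "A \<ge> 0"
proof (rule ccontr)
  assume "\<not> A \<ge> 0" then have A: "A < 0" by simp
  define z where "z = (\<bar>B\<bar> + \<bar>C\<bar> + 1)/(-A) + 1"
  have "(\<bar>B\<bar> + \<bar>C\<bar> + 1)/(-A) > 0" using A by (intro divide_pos_pos) auto
  then have z1: "z \<ge> 1" by (simp add: z_def)
  have "-A*z = \<bar>B\<bar> + \<bar>C\<bar> + 1 + (-A)" using A by (simp add: z_def field_simps)
  then have Az: "A*z + \<bar>B\<bar> + \<bar>C\<bar> < -1 + 1" using A by linarith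
  have "B*z \<le> \<bar>B\<bar>*z" using z1 by (simp add: mult_right_mono)
  moreover have "\<bar>C\<bar> \<le> \<bar>C\<bar>*z" using z1 by (simp add: mult_le_cancel_left1)
  moreover have "C \<le> \<bar>C\<bar>" by simp
  ultimately have "A*z^2 + B*z + C \<le> z*(A*z + \<bar>B\<bar> + \<bar>C\<bar>)" by (simp add: power2_eq_square algebra_simps)
  also have "\<dots> < 0" using Az z1 by (simp add: mult_pos_neg)
  finally have "A*z^2 + B*z + C < 0" .
  then show False using assms[rule_format, of z] by linarith
qed

lemma pd_quad:
  fixes a b c x y :: real
  assumes "a > 0" "c > 0" "4*a*c - b^2 > 0"
  defines "m \<equiv> (4*a*c - b^2) / (4*(a+c))"
  shows "a*x^2 + b*x*y + c*y^2 \<ge> m*(x^2+y^2)"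
proof -
  have ac: "a + c > 0" using assms by simp
  have e: "4*m*(a+c) = 4*a*c - b^2" using ac by (simp add: m_def field_simps)
  have "m*(4*(a+c)) < a * (4*(a+c))"
  proof -
    have "m*(4*(a+c)) = 4*a*c - b^2" using e by (simp add: algebra_simps)
    also have "\<dots> < a*(4*(a+c))" using assms(1) by (simp add: algebra_simps power2_eq_square) (smt (verit) mult_pos_pos zero_le_square)
    finally show ?thesis .
  qed
  then have A: "a - m > 0" using ac by simp
  have id: "4*(a-m)*(a*x^2 + b*x*y + c*y^2 - m*(x^2+y^2)) = (2*(a-m)*x+b*y)^2 + 4*m^2*y^2 + (4*a*c - b^2 - 4*m*(a+c))*y^2"
    by (simp add: power2_eq_square algebra_simps)
  then have "4*(a-m)*(a*x^2 + b*x*y + c*y^2 - m*(x^2+y^2)) \<ge> 0" using e by simp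
  then have "a*x^2 + b*x*y + c*y^2 - m*(x^2+y^2) \<ge> 0" using A by (simp add: zero_le_mult_iff)
  then show ?thesis by simp
qed

lemma f2_ev: assumes "form_of_deg 2 f2"
  shows "ev2 f2 x y = bcoeff f2 2 0 * x^2 + bcoeff f2 1 1 * x * y + bcoeff f2 0 2 * y^2"
  by (simp add: form_ev[OF assms] sum2)

lemma f2_pd:
  assumes f: "form_of_deg 2 f2" and psd: "\<forall>x y. ev2 f2 x y \<ge> 0" and nsq: "\<not> (\<exists>g :: bipoly. f2 = g^2)"
  shows "bcoeff f2 2 0 > 0 \<and> bcoeff f2 0 2 > 0 \<and> 4 * bcoeff f2 2 0 * bcoeff f2 0 2 - (bcoeff f2 1 1)^2 > 0"
proof -
  define a where "a = bcoeff f2 2 0"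
  define b where "b = bcoeff f2 1 1"
  define c where "c = bcoeff f2 0 2"
  have ev: "ev2 f2 x y = a*x^2 + b*x*y + c*y^2" for x y by (simp add: f2_ev[OF f] a_def b_def c_def)
  have a0: "a \<ge> 0" using psd[rule_format, of 1 0] by (simp add: ev)
  have c0: "c \<ge> 0" using psd[rule_format, of 0 1] by (simp add: ev)
  have disc: "b^2 \<le> 4*a*c"
  proof (cases "c = 0")
    case True
    have "b = 0"
    proof (rule ccontr)
      assume "b \<noteq> 0"
      then have "ev2 f2 1 (-(a+1)/b) = -1" by (simp add: ev True field_simps)
      then show False using psd[rule_format, of 1 "-(a+1)/b"] by simp
    qed
    then show ?thesis using True by simp
  next
    case False
    then have cp: "c > 0" using c0 by simp
    have "ev2 f2 (2*c) (-b) = c*(4*a*c - b^2)" by (simp add: ev power2_eq_square algebra_simps)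
    then have "c*(4*a*c - b^2) \<ge> 0" using psd[rule_format, of "2*c" "-b"] by simp
    then show ?thesis using cp by (simp add: zero_le_mult_iff)
  qed
  have ne: "b^2 \<noteq> 4*a*c"
  proof
    assume eq: "b^2 = 4*a*c"
    define s :: real where "s = (if b \<ge> 0 then 1 else -1)"
    define g where "g = mkf 1 (\<lambda>i. if i = 0 then sqrt a else s * sqrt c)"
    have eg: "ev2 g x y = sqrt a * x + s * sqrt c * y" for x y by (simp add: g_def ev2_mkf sum1)
    have ss: "s^2 = 1" by (simp add: s_def)
    have sac: "2 * s * (sqrt a * sqrt c) = b"
    proof -
      have "sqrt a * sqrt c = sqrt (a*c)" by (simp add: real_sqrt_mult)
      also have "a*c = (b/2)^2" using eq by (simp add: power2_eq_square field_simps)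
      finally have "sqrt a * sqrt c = \<bar>b\<bar>/2" by simp
      then show ?thesis by (cases "b \<ge> 0") (simp_all add: s_def abs_if)
    qed
    have "f2 = g^2"
    proof (rule ev2_inj)
      fix x y
      have "(sqrt a * x + s * sqrt c * y)^2 = (sqrt a * sqrt a) * x^2 + (2 * s * (sqrt a * sqrt c)) * x * y + (s * s) * (sqrt c * sqrt c) * y^2"
        by (simp add: power2_eq_square algebra_simps)
      also have "\<dots> = a*x^2 + b*x*y + c*y^2" using a0 c0 ss sac by (simp add: power2_eq_square)
      finally show "ev2 f2 x y = ev2 (g^2) x y" by (simp add: eg ev)
    qed
    then show False using nsq by blast
  qed
  have d: "4*a*c - b^2 > 0" using disc ne by linarith
  have "b^2 \<ge> 0" by simp
  then have "4*a*c > 0" using d by linarith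
  then have "a*c > 0" by (simp add: mult.assoc)
  then have "a \<noteq> 0" "c \<noteq> 0" by auto
  then have "a > 0 \<and> c > 0" using a0 c0 by simp
  then show ?thesis using d by (simp add: a_def b_def c_def)
qed



lemma form_at0: assumes "form_of_deg j p" "j > 0" shows "ev2 p 0 0 = 0"
  using form_homog[OF assms(1), of 0 0 0] assms(2) by (simp add: zero_power)

lemma form_not_unit: assumes "form_of_deg j p" "j > 0" shows "\<not> p dvd 1"
proof
  assume "p dvd 1"
  then obtain r where "1 = p * r" by (auto elim: dvdE)
  then have "ev2 1 0 0 = ev2 p 0 0 * ev2 r 0 0" by (metis ev2_mult)
  then show False using form_at0[OF assms] by (simp add: ev2_def)
qed

lemma const_unit: assumes "degree p = 0" "p \<noteq> (0::bipoly)" "degree (coeff p 0) = 0"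
  shows "p dvd 1"
proof -
  have c0: "coeff p 0 \<noteq> 0" using assms(1,2) degree_0_id[OF assms(1)] by (metis pCons_0_0)
  have "coeff p 0 dvd 1" using c0 assms(3) is_unit_iff_degree by blast
  then show ?thesis using is_unit_poly_iff degree_0_id[OF assms(1)] by metis
qed

lemma f2_irreducible:
  assumes f: "form_of_deg 2 f2" and pd: "\<forall>x y. (x,y) \<noteq> (0,0) \<longrightarrow> ev2 f2 x y > 0"
  shows "irreducible f2"
proof (rule irreducibleI)
  have p01: "ev2 f2 0 1 > 0" using pd by auto
  then show "f2 \<noteq> 0" by auto
  show "\<not> f2 dvd 1" by (rule form_not_unit[OF f]) simp
  fix p q assume pq: "f2 = p * q"
  have pn: "p \<noteq> 0" and qn: "q \<noteq> 0" using pq \<open>f2 \<noteq> 0\<close> by auto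
  have c2: "coeff f2 2 = [:ev2 f2 0 1:]"
    by (simp add: form_coeff[OF f] f2_ev[OF f] monom_0)
  have df: "degree f2 = 2"
  proof (rule antisym)
    show "degree f2 \<le> 2" by (rule form_degree[OF f])
    show "2 \<le> degree f2" by (rule le_degree) (use c2 p01 in simp)
  qed
  have lf: "lead_coeff f2 = [:ev2 f2 0 1:]" using df c2 by simp
  have dpq: "degree p + degree q = 2" using degree_mult_eq[OF pn qn] pq df by simp
  have "lead_coeff p * lead_coeff q = [:ev2 f2 0 1:]" using lf pq lead_coeff_mult by metis
  moreover have "lead_coeff p \<noteq> 0" "lead_coeff q \<noteq> 0" using pn qn by auto
  ultimately have "degree (lead_coeff p) + degree (lead_coeff q) = 0"
    using degree_mult_eq[of "lead_coeff p" "lead_coeff q"] by simp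
  then have dlp: "degree (lead_coeff p) = 0" and dlq: "degree (lead_coeff q) = 0" by auto
  show "p dvd 1 \<or> q dvd 1"
  proof (cases "degree p = 0")
    case True
    then have "p dvd 1" using const_unit pn dlp by simp
    then show ?thesis by simp
  next
    case False
    show ?thesis
    proof (cases "degree q = 0")
      case True
      then have "q dvd 1" using const_unit qn dlq by simp
      then show ?thesis by simp
    next
      case False2: False
      with False dpq have dp: "degree p = 1" by simp
      define u where "u = coeff (coeff p 1) 0"
      have lp: "coeff p 1 = [:u:]" using dlp dp degree_0_id u_def by metis
      have u0: "u \<noteq> 0" using lp \<open>lead_coeff p \<noteq> 0\<close> dp by auto
      define \<alpha> where "\<alpha> = poly (coeff p 0) 1"
      have evp: "ev2 p 1 y = \<alpha> + u * y" for y
        using lp by (simp add: ev2_sum dp sum1 \<alpha>_def)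
      have "ev2 p 1 (-\<alpha>/u) = 0" using u0 by (simp add: evp)
      then have "ev2 f2 1 (-\<alpha>/u) = 0" using pq by simp
      moreover have "ev2 f2 1 (-\<alpha>/u) > 0" using pd by simp
      ultimately show ?thesis by simp
    qed
  qed
qed

lemma key_alg:
  fixes f2 f3 f4 \<xi>0 \<eta>0 A B :: bipoly
  assumes f: "form_of_deg 2 f2" and pd: "\<forall>x y. (x,y) \<noteq> (0,0) \<longrightarrow> ev2 f2 x y > 0"
    and ndvd: "\<not> f2 dvd f3"
    and sqf: "squarefree (bconst 4 * f2 * f4 - f3^2)"
    and x0: "form_of_deg 2 \<xi>0" and e0: "form_of_deg 3 \<eta>0"
    and eq: "\<eta>0^2 + f2 * \<xi>0^2 = bconst 4 * f2 * f4 - f3^2"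
    and fA: "form_of_deg 2 A" and fB: "form_of_deg 3 B"
    and lin: "\<eta>0 * B + f2 * \<xi>0 * A = 0"
  shows "A = 0 \<and> B = 0"
proof -
  let ?D = "bconst 4 * f2 * f4 - f3^2"
  have sq: "d^2 dvd ?D \<Longrightarrow> d dvd 1" for d using sqf by (simp add: squarefree_def)
  have prime: "prime_elem f2" by (rule irreducible_imp_prime_elem[OF f2_irreducible[OF f pd]])
  have cop1: "coprime \<eta>0 \<xi>0"
  proof (rule coprimeI)
    fix d assume d1: "d dvd \<eta>0" and d2: "d dvd \<xi>0"
    have "d^2 dvd \<eta>0^2" using d1 by (rule dvd_power_same)
    moreover have "d^2 dvd f2 * \<xi>0^2" using d2 by (simp add: dvd_power_same)
    ultimately have "d^2 dvd \<eta>0^2 + f2 * \<xi>0^2" by (rule dvd_add)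
    then show "d dvd 1" using sq eq by simp
  qed
  have e0n: "\<eta>0 \<noteq> 0"
  proof
    assume h: "\<eta>0 = 0"
    have "?D = f2 * \<xi>0^2" using eq h by simp
    then have "\<xi>0^2 dvd ?D" by simp
    then have "\<xi>0 dvd 1" by (rule sq)
    then show False using form_not_unit[OF x0] by simp
  qed
  have cop2: "coprime \<eta>0 f2"
  proof -
    have "\<not> f2 dvd \<eta>0"
    proof
      assume h: "f2 dvd \<eta>0"
      have "f3^2 = bconst 4 * f2 * f4 - \<eta>0^2 - f2 * \<xi>0^2" using eq by (simp add: algebra_simps)
      moreover have "f2 dvd bconst 4 * f2 * f4 - \<eta>0^2 - f2 * \<xi>0^2"
        using h by (intro dvd_diff) (auto simp: power2_eq_square)
      ultimately have "f2 dvd f3^2" by simp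
      then have "f2 dvd f3" using prime prime_elem_dvd_power by blast
      then show False using ndvd by simp
    qed
    then have "coprime f2 \<eta>0" using prime prime_elem_imp_coprime by blast
    then show ?thesis by (simp add: coprime_commute)
  qed
  have cop: "coprime \<eta>0 (f2 * \<xi>0)" using cop1 cop2 by simp
  have "\<eta>0 dvd f2 * \<xi>0 * A"
  proof -
    have "f2 * \<xi>0 * A = \<eta>0 * (- B)" using lin by (simp add: algebra_simps add_eq_0_iff)
    then show ?thesis by simp
  qed
  then have "\<eta>0 dvd A" using cop coprime_dvd_mult_right_iff by blast
  then have A0: "A = 0" using form_dvd_zero[OF fA e0 _ e0n] by simp
  then have "\<eta>0 * B = 0" using lin by simp
  then show ?thesis using A0 e0n by simp
qed



lemma ift_curve:
  fixes \<Phi> :: "'a::euclidean_space \<times> real \<Rightarrow> 'a \<times> real"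
    and \<Phi>' :: "'a \<times> real \<Rightarrow> ('a \<times> real) \<Rightarrow>\<^sub>L ('a \<times> real)"
  assumes der: "\<And>z. (\<Phi> has_derivative blinfun_apply (\<Phi>' z)) (at z)"
    and cont: "continuous_on UNIV \<Phi>'"
    and snd: "\<And>z. snd (\<Phi> z) = snd z"
    and z0: "\<Phi> (x0, 0) = (0, 0)"
    and inj0: "\<And>h. blinfun_apply (\<Phi>' (x0,0)) h = 0 \<Longrightarrow> h = 0"
  shows "\<exists>\<delta>>0. \<exists>x. continuous_on {-\<delta><..<\<delta>} x \<and> x 0 = x0 \<and> (\<forall>t. \<bar>t\<bar> < \<delta> \<longrightarrow> fst (\<Phi> (x t, t)) = 0)"
proof -
  let ?L = "blinfun_apply (\<Phi>' (x0,0))"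
  have lin: "linear ?L" by (rule bounded_linear.linear[OF blinfun.bounded_linear_right])
  have "inj ?L"
  proof (rule injI)
    fix a b assume "?L a = ?L b"
    then have "?L (a - b) = 0" using linear_diff[OF lin] by simp
    then have "a - b = 0" by (rule inj0)
    then show "a = b" by simp
  qed
  then obtain g where g: "linear g" "g \<circ> ?L = id" using linear_injective_left_inverse[OF lin] by blast
  have bg: "bounded_linear g" using g(1) linear_conv_bounded_linear by blast
  define invf where "invf = Blinfun g"
  have invid: "invf o\<^sub>L \<Phi>' (x0,0) = id_blinfun"
  proof (rule blinfun_eqI)
    fix i
    have "g (?L i) = i" using g(2) by (metis comp_apply id_apply)
    then show "blinfun_apply (invf o\<^sub>L \<Phi>' (x0, 0)) i = blinfun_apply id_blinfun i"
      by (simp add: invf_def bounded_linear_Blinfun_apply[OF bg])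
  qed
  obtain U' V G G' where "open U'" "U' \<subseteq> UNIV" "(x0,0) \<in> U'" "open V" "\<Phi> (x0,0) \<in> V" "homeomorphism U' V \<Phi> G"
    "\<And>y. y \<in> V \<Longrightarrow> (G has_derivative (G' y)) (at y)"
    "\<And>y. y \<in> V \<Longrightarrow> G' y = inv (blinfun_apply (\<Phi>'(G y)))"
    "\<And>y. y \<in> V \<Longrightarrow> bij (blinfun_apply (\<Phi>'(G y)))"
    by (rule inverse_function_theorem[OF open_UNIV der cont UNIV_I invid]) blast
  note hom = \<open>homeomorphism U' V \<Phi> G\<close>
  have V0: "(0,0) \<in> V" using \<open>\<Phi> (x0,0) \<in> V\<close> z0 by simp
  obtain \<delta> where d: "\<delta> > 0" "ball (0,0) \<delta> \<subseteq> V" using \<open>open V\<close> V0 open_contains_ball by blast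
  have inV: "(0,t) \<in> V" if "\<bar>t\<bar> < \<delta>" for t
  proof -
    have "dist (0,0) (0::'a,t) = \<bar>t\<bar>" by (simp add: dist_Pair_Pair)
    then show ?thesis using d that by auto
  qed
  have hV: "\<Phi> (G y) = y" if "y \<in> V" for y using hom that by (simp add: homeomorphism_def)
  have hU: "G (\<Phi> z) = z" if "z \<in> U'" for z using hom that by (simp add: homeomorphism_def)
  have cG: "continuous_on V G" using hom by (simp add: homeomorphism_def)
  define x where "x t = fst (G (0,t))" for t
  show ?thesis
  proof (intro exI conjI allI impI)
    show "\<delta> > 0" by fact
    show "continuous_on {-\<delta><..<\<delta>} x"
    proof -
      have "continuous_on {-\<delta><..<\<delta>} (\<lambda>t. G (0::'a, t))"
        by (rule continuous_on_compose2[OF cG]) (auto intro!: continuous_intros inV)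
      then show ?thesis unfolding x_def by (intro continuous_intros)
    qed
    show "x 0 = x0" using hU[OF \<open>(x0,0) \<in> U'\<close>] z0 by (simp add: x_def)
    fix t :: real assume t: "\<bar>t\<bar> < \<delta>"
    have e: "\<Phi> (G (0,t)) = (0,t)" using hV[OF inV[OF t]] .
    then have "snd (G (0,t)) = t" using snd[of "G (0,t)"] by simp
    then have "G (0,t) = (x t, t)" by (simp add: x_def prod_eq_iff)
    then show "fst (\<Phi> (x t, t)) = 0" using e by simp
  qed
qed



type_synonym X = "(real \<times> real \<times> real) \<times> (real \<times> real \<times> real \<times> real)"

definition ca :: "X \<Rightarrow> nat \<Rightarrow> real" where
  "ca v i = (if i = 0 then fst (fst v) else if i = 1 then fst (snd (fst v)) else snd (snd (fst v)))"
definition cb :: "X \<Rightarrow> nat \<Rightarrow> real" where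
  "cb v i = (if i = 0 then fst (snd v) else if i = 1 then fst (snd (snd v))
     else if i = 2 then fst (snd (snd (snd v))) else snd (snd (snd (snd v))))"
definition xi :: "X \<Rightarrow> real \<Rightarrow> real" where
  "xi v y = fst (fst v) + fst (snd (fst v)) * y + snd (snd (fst v)) * y^2"
definition eta :: "X \<Rightarrow> real \<Rightarrow> real" where
  "eta v y = fst (snd v) + fst (snd (snd v)) * y + fst (snd (snd (snd v))) * y^2 + snd (snd (snd (snd v))) * y^3"

lemma ev2_XI: "ev2 (mkf 2 (ca v)) 1 y = xi v y"
  by (simp add: ev2_mkf sum2 ca_def xi_def)
lemma ev2_ETA: "ev2 (mkf 3 (cb v)) 1 y = eta v y"
  by (simp add: ev2_mkf sum3 cb_def eta_def)

definition GG :: "(real\<Rightarrow>real) \<Rightarrow> (real\<Rightarrow>real) \<Rightarrow> (real\<Rightarrow>real) \<Rightarrow> X \<times> real \<Rightarrow> real \<Rightarrow> real" where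
  "GG p2 p3 p4 z y = (eta (fst z) y)^2 + p2 y * (xi (fst z) y)^2
     + snd z * (4 * xi (fst z) y * p4 y - (xi (fst z) y)^3) - (4 * p2 y * p4 y - (p3 y)^2)"
definition dGG :: "(real\<Rightarrow>real) \<Rightarrow> (real\<Rightarrow>real) \<Rightarrow> X \<times> real \<Rightarrow> X \<times> real \<Rightarrow> real \<Rightarrow> real" where
  "dGG p2 p4 z h y = 2 * eta (fst z) y * eta (fst h) y + 2 * p2 y * xi (fst z) y * xi (fst h) y
     + snd h * (4 * xi (fst z) y * p4 y - (xi (fst z) y)^3)
     + snd z * (4 * xi (fst h) y * p4 y - 3 * (xi (fst z) y)^2 * xi (fst h) y)"

lemma xi_der: "((\<lambda>z::X\<times>real. xi (fst z) y) has_derivative (\<lambda>h. xi (fst h) y)) (at z)"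
  unfolding xi_def by (auto intro!: derivative_eq_intros)
lemma eta_der: "((\<lambda>z::X\<times>real. eta (fst z) y) has_derivative (\<lambda>h. eta (fst h) y)) (at z)"
  unfolding eta_def by (auto intro!: derivative_eq_intros)

lemma GG_der: "((\<lambda>z. GG p2 p3 p4 z y) has_derivative (\<lambda>h. dGG p2 p4 z h y)) (at z)"
  unfolding GG_def
  apply (rule derivative_eq_intros xi_der eta_der refl)+
  apply (simp add: dGG_def fun_eq_iff power2_eq_square power3_eq_cube algebra_simps)
  done



definition ev7 :: "(real \<Rightarrow> real) \<Rightarrow> X" where
  "ev7 g = ((g 0, g 1, g 2), (g 3, g 4, g 5, g 6))"

lemma le6: "(j::nat) \<le> 6 \<longleftrightarrow> j = 0 \<or> j = 1 \<or> j = 2 \<or> j = 3 \<or> j = 4 \<or> j = 5 \<or> j = 6"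
  by presburger

lemma all6: "(\<forall>j\<le>6. P (real j)) \<longleftrightarrow> P 0 \<and> P 1 \<and> P 2 \<and> P 3 \<and> P 4 \<and> P 5 \<and> P 6"
proof
  assume h: "\<forall>j\<le>6. P (real j)"
  show "P 0 \<and> P 1 \<and> P 2 \<and> P 3 \<and> P 4 \<and> P 5 \<and> P 6"
    using h[rule_format, of 0] h[rule_format, of 1] h[rule_format, of 2] h[rule_format, of 3]
      h[rule_format, of 4] h[rule_format, of 5] h[rule_format, of 6] by simp
next
  assume h: "P 0 \<and> P 1 \<and> P 2 \<and> P 3 \<and> P 4 \<and> P 5 \<and> P 6"
  show "\<forall>j\<le>6. P (real j)"
  proof (intro allI impI)
    fix j :: nat assume "j \<le> 6"
    then have "j = 0 \<or> j = 1 \<or> j = 2 \<or> j = 3 \<or> j = 4 \<or> j = 5 \<or> j = 6" using le6 by blast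
    then show "P (real j)" using h by (elim disjE) simp_all
  qed
qed

lemma ev7_zero: "ev7 g = 0 \<longleftrightarrow> (\<forall>j\<le>6. g (real j) = 0)"
  using all6[of "\<lambda>x. g x = 0"] by (simp add: ev7_def zero_prod_def)

lemma X_zero: "(v::X) = 0 \<longleftrightarrow> (\<forall>i\<le>2. ca v i = 0) \<and> (\<forall>i\<le>3. cb v i = 0)"
proof -
  have a: "(\<forall>i\<le>2. ca v i = 0) \<longleftrightarrow> fst (fst v) = 0 \<and> fst (snd (fst v)) = 0 \<and> snd (snd (fst v)) = 0"
    by (auto simp: ca_def le_Suc_eq numeral_eq_Suc)
  have b: "(\<forall>i\<le>3. cb v i = 0) \<longleftrightarrow> fst (snd v) = 0 \<and> fst (snd (snd v)) = 0 \<and> fst (snd (snd (snd v))) = 0 \<and> snd (snd (snd (snd v))) = 0"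
    by (auto simp: cb_def le_Suc_eq numeral_eq_Suc)
  show ?thesis unfolding a b by (auto simp: zero_prod_def prod_eq_iff)
qed

definition Phi where "Phi p2 p3 p4 z = (ev7 (GG p2 p3 p4 z), snd z)"
definition dPhi where "dPhi p2 p4 z h = (ev7 (dGG p2 p4 z h), snd h)"

lemma Phi_der: "(Phi p2 p3 p4 has_derivative dPhi p2 p4 z) (at z)"
  unfolding Phi_def dPhi_def ev7_def
  by (intro has_derivative_Pair GG_der has_derivative_snd has_derivative_ident)

lemma dPhi_bl: "bounded_linear (dPhi p2 p4 z)"
  using Phi_der by (rule has_derivative_bounded_linear)

lemma dPhi_cont: "continuous_on UNIV (\<lambda>z. dPhi p2 p4 z h)"
  unfolding dPhi_def ev7_def dGG_def xi_def eta_def by (intro continuous_intros)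

lemma curve_exists:
  fixes p2 p3 p4 :: "real \<Rightarrow> real" and v0 :: X
  assumes z0: "\<And>j. j \<le> 6 \<Longrightarrow> GG p2 p3 p4 (v0, 0) (real j) = 0"
    and inj: "\<And>hv. (\<And>j. j \<le> 6 \<Longrightarrow> 2 * eta v0 (real j) * eta hv (real j) + 2 * p2 (real j) * xi v0 (real j) * xi hv (real j) = 0) \<Longrightarrow> hv = 0"
  shows "\<exists>\<delta>>0. \<exists>x. continuous_on {-\<delta><..<\<delta>} x \<and> x 0 = v0 \<and> (\<forall>t. \<bar>t\<bar> < \<delta> \<longrightarrow> (\<forall>j\<le>6. GG p2 p3 p4 (x t, t) (real j) = 0))"
proof -
  define D where "D z = Blinfun (dPhi p2 p4 z)" for z
  have Dapp: "blinfun_apply (D z) = dPhi p2 p4 z" for z by (simp add: D_def bounded_linear_Blinfun_apply[OF dPhi_bl])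
  have der: "(Phi p2 p3 p4 has_derivative blinfun_apply (D z)) (at z)" for z unfolding Dapp by (rule Phi_der)
  have cont: "continuous_on UNIV D"
    by (rule continuous_on_blinfun_componentwise) (simp add: Dapp dPhi_cont)
  have snd: "snd (Phi p2 p3 p4 z) = snd z" for z by (simp add: Phi_def)
  have z00: "Phi p2 p3 p4 (v0, 0) = (0, 0)" using z0 by (simp add: Phi_def ev7_zero)
  have inj0: "h = 0" if "blinfun_apply (D (v0,0)) h = 0" for h
  proof -
    have h1: "ev7 (dGG p2 p4 (v0,0) h) = 0" and h2: "snd h = 0" using that by (simp_all add: Dapp dPhi_def zero_prod_def)
    have "fst h = 0"
    proof (rule inj)
      fix j :: nat assume "j \<le> 6"
      then have "dGG p2 p4 (v0,0) h (real j) = 0" using h1 ev7_zero by blast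
      then show "2 * eta v0 (real j) * eta (fst h) (real j) + 2 * p2 (real j) * xi v0 (real j) * xi (fst h) (real j) = 0"
        using h2 by (simp add: dGG_def)
    qed
    then show "h = 0" using h2 by (simp add: prod_eq_iff)
  qed
  obtain \<delta> x where "\<delta> > 0" "continuous_on {-\<delta><..<\<delta>} x" "x 0 = v0"
      "\<And>t. \<bar>t\<bar> < \<delta> \<Longrightarrow> fst (Phi p2 p3 p4 (x t, t)) = 0"
    using ift_curve[OF der cont snd z00 inj0] by blast
  then show ?thesis by (intro exI[of _ \<delta>] exI[of _ x]) (auto simp: Phi_def ev7_zero)
qed



lemma ca_cont: "continuous_on S x \<Longrightarrow> continuous_on S (\<lambda>t. ca (x t) i)"
  unfolding ca_def by (cases "i = 0"; cases "i = 1") (auto intro!: continuous_intros)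
lemma cb_cont: "continuous_on S x \<Longrightarrow> continuous_on S (\<lambda>t. cb (x t) i)"
  unfolding cb_def by (cases "i = 0"; cases "i = 1"; cases "i = 2") (auto intro!: continuous_intros)

lemma norm_fst_le: "norm (fst x) \<le> norm x"
  unfolding norm_prod_def by (rule real_le_rsqrt) simp
lemma norm_snd_le: "norm (snd x) \<le> norm x"
  unfolding norm_prod_def by (rule real_le_rsqrt) simp

lemma ca_dist: "\<bar>ca u i - ca w i\<bar> \<le> dist u w"
proof -
  have e: "ca u i - ca w i = ca (u - w) i" by (simp add: ca_def)
  have n1: "norm (fst (u - w)) \<le> norm (u - w)" by (rule norm_fst_le)
  have n2: "norm (fst (snd (fst (u - w)))) \<le> norm (u - w)"
    by (meson norm_fst_le norm_snd_le order_trans n1)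
  have n3: "norm (snd (snd (fst (u - w)))) \<le> norm (u - w)"
    by (meson norm_snd_le order_trans n1)
  have n0: "norm (fst (fst (u - w))) \<le> norm (u - w)"
    by (meson norm_fst_le order_trans n1)
  show ?thesis unfolding e dist_norm ca_def using n0 n2 n3 by (auto simp: real_norm_def)
qed

lemma quad_bound:
  fixes c0 c1 c2 x y :: real
  shows "\<bar>c0 * x^2 + c1 * x * y + c2 * y^2\<bar> \<le> (\<bar>c0\<bar> + \<bar>c1\<bar> + \<bar>c2\<bar>) * (x^2 + y^2)"
proof -
  have xy: "\<bar>x * y\<bar> \<le> x^2 + y^2"
  proof -
    have "0 \<le> (\<bar>x\<bar> - \<bar>y\<bar>)^2" by simp
    then have "2 * (\<bar>x\<bar> * \<bar>y\<bar>) \<le> x^2 + y^2" by (simp add: power2_eq_square algebra_simps)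
    moreover have "0 \<le> \<bar>x\<bar> * \<bar>y\<bar>" by simp
    ultimately have "\<bar>x\<bar> * \<bar>y\<bar> \<le> x^2 + y^2" by linarith
    then show ?thesis by (simp add: abs_mult)
  qed
  have "\<bar>c0 * x^2 + c1 * x * y + c2 * y^2\<bar> \<le> \<bar>c0\<bar> * x^2 + \<bar>c1\<bar> * \<bar>x * y\<bar> + \<bar>c2\<bar> * y^2"
    by (rule order_trans[OF abs_triangle_ineq order_trans[OF add_mono[OF abs_triangle_ineq order_refl]]])
       (simp add: abs_mult mult.assoc)
  also have "\<dots> \<le> \<bar>c0\<bar> * (x^2 + y^2) + \<bar>c1\<bar> * (x^2 + y^2) + \<bar>c2\<bar> * (x^2 + y^2)"
    by (intro add_mono mult_left_mono xy) auto
  finally show ?thesis by (simp add: algebra_simps)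
qed



theorem proposition4p4:
  fixes f2 f3 f4 \<xi>0 \<eta>0 :: bipoly
  assumes "form_of_deg 2 f2" and "form_of_deg 3 f3" and "form_of_deg 4 f4"
    and spd: "\<forall>x y z. (x, y, z) \<noteq> (0, 0, 0) \<longrightarrow> evf f2 f3 f4 x y z > 0"
    and psd: "\<forall>x y z. evf f2 f3 f4 x y z - z^4 \<ge> 0"
    and nsq: "\<not> (\<exists>g :: bipoly. f2 = g^2)"
    and ndvd: "\<not> f2 dvd f3"
    and sqf: "squarefree (bconst 4 * f2 * f4 - f3^2)"
    and "form_of_deg 2 \<xi>0" and "form_of_deg 3 \<eta>0"
    and "\<eta>0^2 + f2 * \<xi>0^2 = bconst 4 * f2 * f4 - f3^2"
  shows "\<exists>\<epsilon>>0. \<exists>\<xi> \<eta> :: real \<Rightarrow> bipoly.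
           (\<forall>k i. continuous_on {-\<epsilon><..<\<epsilon>} (\<lambda>t. bcoeff (\<xi> t) k i)) \<and>
           (\<forall>k i. continuous_on {-\<epsilon><..<\<epsilon>} (\<lambda>t. bcoeff (\<eta> t) k i)) \<and>
           \<xi> 0 = \<xi>0 \<and> \<eta> 0 = \<eta>0 \<and>
           (\<forall>t. \<bar>t\<bar> < \<epsilon> \<longrightarrow>
              form_of_deg 2 (\<xi> t) \<and> form_of_deg 3 (\<eta> t) \<and>
              (\<eta> t)^2 + f3^2 = (f2 - bconst t * \<xi> t) * (bconst 4 * f4 - (\<xi> t)^2) \<and>
              psd2 (f2 - bconst t * \<xi> t) \<and> psd2 (bconst 4 * f4 - (\<xi> t)^2))"
proof -
  note f2f = assms(1) and f3f = assms(2) and f4f = assms(3)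
  note x0f = assms(9) and e0f = assms(10) and eq = assms(11)
  have quad: "ev2 f2 x y * z^2 + ev2 f3 x y * z + ev2 f4 x y \<ge> 0" for x y z
    using psd[rule_format, of x y z] by (simp add: evf_def)
  have f2psd: "ev2 f2 x y \<ge> 0" for x y
    using quad_lead_nonneg[of "ev2 f2 x y" "ev2 f3 x y" "ev2 f4 x y"] quad by blast
  define a where "a = bcoeff f2 2 0"
  define b where "b = bcoeff f2 1 1"
  define c where "c = bcoeff f2 0 2"
  have abc: "a > 0" "c > 0" "4*a*c - b^2 > 0"
    using f2_pd[OF f2f _ nsq] f2psd by (auto simp: a_def b_def c_def)
  define m where "m = (4*a*c - b^2) / (4*(a+c))"
  have m0: "m > 0" using abc by (simp add: m_def)
  have f2m: "ev2 f2 x y \<ge> m * (x^2 + y^2)" for x y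
    using pd_quad[OF abc, of x y] f2_ev[OF f2f, of x y] by (simp add: m_def a_def b_def c_def)
  have pd: "\<forall>x y. (x,y) \<noteq> (0,0) \<longrightarrow> ev2 f2 x y > 0"
  proof (intro allI impI)
    fix x y :: real assume "(x,y) \<noteq> (0,0)"
    then have "x^2 + y^2 > 0" by (auto simp: sum_power2_gt_zero_iff)
    then have "m * (x^2 + y^2) > 0" using m0 by simp
    then show "ev2 f2 x y > 0" using f2m[of x y] by linarith
  qed
  define p2 where "p2 y = ev2 f2 1 y" for y
  define p3 where "p3 y = ev2 f3 1 y" for y
  define p4 where "p4 y = ev2 f4 1 y" for y
  define v0 :: X where "v0 = ((bcoeff \<xi>0 2 0, bcoeff \<xi>0 1 1, bcoeff \<xi>0 0 2),
      (bcoeff \<eta>0 3 0, bcoeff \<eta>0 2 1, bcoeff \<eta>0 1 2, bcoeff \<eta>0 0 3))"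
  have XI0: "mkf 2 (ca v0) = \<xi>0"
  proof -
    have "mkf 2 (ca v0) = mkf 2 (\<lambda>i. bcoeff \<xi>0 (2-i) i)"
    proof (rule mkf_cong)
      fix i :: nat assume "i \<le> 2"
      then have "i = 0 \<or> i = 1 \<or> i = 2" by linarith
      then show "ca v0 i = bcoeff \<xi>0 (2-i) i" by (elim disjE) (simp_all add: ca_def v0_def)
    qed
    then show ?thesis using mkf_form[OF x0f] by simp
  qed
  have ETA0: "mkf 3 (cb v0) = \<eta>0"
  proof -
    have "mkf 3 (cb v0) = mkf 3 (\<lambda>i. bcoeff \<eta>0 (3-i) i)"
    proof (rule mkf_cong)
      fix i :: nat assume "i \<le> 3"
      then have "i = 0 \<or> i = 1 \<or> i = 2 \<or> i = 3" by linarith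
      then show "cb v0 i = bcoeff \<eta>0 (3-i) i" by (elim disjE) (simp_all add: cb_def v0_def)
    qed
    then show ?thesis using mkf_form[OF e0f] by simp
  qed
  have xi0: "xi v0 y = ev2 \<xi>0 1 y" for y using ev2_XI[of v0 y] XI0 by simp
  have eta0: "eta v0 y = ev2 \<eta>0 1 y" for y using ev2_ETA[of v0 y] ETA0 by simp
  have z0: "GG p2 p3 p4 (v0, 0) (real j) = 0" for j
  proof -
    have "ev2 (\<eta>0^2 + f2 * \<xi>0^2) 1 (real j) = ev2 (bconst 4 * f2 * f4 - f3^2) 1 (real j)" using eq by simp
    then show ?thesis by (simp add: GG_def xi0 eta0 p2_def p3_def p4_def algebra_simps)
  qed
  have inj: "hv = 0" if h: "\<And>j. j \<le> 6 \<Longrightarrow> 2 * eta v0 (real j) * eta hv (real j) + 2 * p2 (real j) * xi v0 (real j) * xi hv (real j) = 0" for hv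
  proof -
    define A where "A = mkf 2 (ca hv)"
    define B where "B = mkf 3 (cb hv)"
    have fA: "form_of_deg 2 A" by (simp add: A_def form_mkf)
    have fB: "form_of_deg 3 B" by (simp add: B_def form_mkf)
    define S where "S = \<eta>0 * B + f2 * \<xi>0 * A"
    have fS: "form_of_deg 6 S"
    proof -
      have "form_of_deg (3+3) (\<eta>0 * B)" by (rule form_mult[OF e0f fB])
      moreover have "form_of_deg ((2+2)+2) (f2 * \<xi>0 * A)" by (rule form_mult[OF form_mult[OF f2f x0f] fA])
      ultimately show ?thesis unfolding S_def by (intro form_add) simp_all
    qed
    have "S = 0"
    proof (rule form_zero[OF fS])
      fix j :: nat assume "j \<le> 6"
      then have "2 * eta v0 (real j) * eta hv (real j) + 2 * p2 (real j) * xi v0 (real j) * xi hv (real j) = 0" by (rule h)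
      moreover have "ev2 A 1 (real j) = xi hv (real j)" "ev2 B 1 (real j) = eta hv (real j)"
        by (simp_all add: A_def B_def ev2_XI ev2_ETA)
      ultimately show "ev2 S 1 (real j) = 0" by (simp add: S_def xi0 eta0 p2_def algebra_simps)
    qed
    then have "A = 0 \<and> B = 0"
      using key_alg[OF f2f pd ndvd sqf x0f e0f eq fA fB] by (simp add: S_def)
    then have AB: "A = 0" "B = 0" by simp_all
    have "\<forall>i\<le>2. ca hv i = 0"
    proof (intro allI impI)
      fix i :: nat assume "i \<le> 2"
      then have "bcoeff A (2-i) i = ca hv i" by (simp add: A_def bcoeff_mkf)
      then show "ca hv i = 0" using AB by (simp add: bcoeff_def)
    qed
    moreover have "\<forall>i\<le>3. cb hv i = 0"
    proof (intro allI impI)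
      fix i :: nat assume "i \<le> 3"
      then have "bcoeff B (3-i) i = cb hv i" by (simp add: B_def bcoeff_mkf)
      then show "cb hv i = 0" using AB by (simp add: bcoeff_def)
    qed
    ultimately show "hv = 0" by (simp add: X_zero)
  qed
  obtain \<delta> x where d: "\<delta> > 0" and xc: "continuous_on {-\<delta><..<\<delta>} x" and x0: "x 0 = v0"
    and xe: "\<And>t j. \<bar>t\<bar> < \<delta> \<Longrightarrow> j \<le> 6 \<Longrightarrow> GG p2 p3 p4 (x t, t) (real j) = 0"
    using curve_exists[of p2 p3 p4 v0, OF z0 inj] by blast
  have in0: "(0::real) \<in> {-\<delta><..<\<delta>}" using d by simp
  have "\<forall>y\<in>{-\<delta><..<\<delta>}. \<forall>e>0. \<exists>d>0. \<forall>t\<in>{-\<delta><..<\<delta>}. dist t y < d \<longrightarrow> dist (x t) (x y) < e"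
    using xc by (simp only: continuous_on_iff)
  then have "\<exists>d>0. \<forall>t\<in>{-\<delta><..<\<delta>}. dist t 0 < d \<longrightarrow> dist (x t) (x 0) < 1"
    using in0 by (meson zero_less_one)
  then obtain \<delta>2 where d2: "\<delta>2 > 0" and d2b: "\<And>t. t \<in> {-\<delta><..<\<delta>} \<Longrightarrow> dist t 0 < \<delta>2 \<Longrightarrow> dist (x t) (x 0) < 1"
    by blast
  define M where "M = \<bar>ca v0 0\<bar> + \<bar>ca v0 1\<bar> + \<bar>ca v0 2\<bar> + 3"
  have M0: "M > 0" by (simp add: M_def add_pos_nonneg)
  define \<epsilon> where "\<epsilon> = min \<delta> (min \<delta>2 (m/M))"
  have e0: "\<epsilon> > 0" using d d2 m0 M0 by (simp add: \<epsilon>_def)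
  have sub: "{-\<epsilon><..<\<epsilon>} \<subseteq> {-\<delta><..<\<delta>}" by (auto simp: \<epsilon>_def)
  have xce: "continuous_on {-\<epsilon><..<\<epsilon>} x" by (rule continuous_on_subset[OF xc sub])
  define \<xi>f where "\<xi>f t = mkf 2 (ca (x t))" for t
  define \<eta>f where "\<eta>f t = mkf 3 (cb (x t))" for t
  have C1: "\<forall>k i. continuous_on {-\<epsilon><..<\<epsilon>} (\<lambda>t. bcoeff (\<xi>f t) k i)"
  proof (intro allI)
    fix k i show "continuous_on {-\<epsilon><..<\<epsilon>} (\<lambda>t. bcoeff (\<xi>f t) k i)"
    proof (cases "i \<le> 2 \<and> k = 2 - i")
      case True
      show ?thesis
      proof (rule continuous_on_cong[THEN iffD2, OF refl _ ca_cont[OF xce]])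
        fix t assume "t \<in> {-\<epsilon><..<\<epsilon>}"
        show "bcoeff (\<xi>f t) k i = ca (x t) i" using True by (simp add: \<xi>f_def bcoeff_mkf)
      qed
    next
      case False
      show ?thesis
      proof (rule continuous_on_cong[THEN iffD2, OF refl _ continuous_on_const])
        fix t assume "t \<in> {-\<epsilon><..<\<epsilon>}"
        show "bcoeff (\<xi>f t) k i = 0" unfolding \<xi>f_def bcoeff_mkf using False by auto
      qed
    qed
  qed
  have C2: "\<forall>k i. continuous_on {-\<epsilon><..<\<epsilon>} (\<lambda>t. bcoeff (\<eta>f t) k i)"
  proof (intro allI)
    fix k i show "continuous_on {-\<epsilon><..<\<epsilon>} (\<lambda>t. bcoeff (\<eta>f t) k i)"
    proof (cases "i \<le> 3 \<and> k = 3 - i")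
      case True
      show ?thesis
      proof (rule continuous_on_cong[THEN iffD2, OF refl _ cb_cont[OF xce]])
        fix t assume "t \<in> {-\<epsilon><..<\<epsilon>}"
        show "bcoeff (\<eta>f t) k i = cb (x t) i" using True by (simp add: \<eta>f_def bcoeff_mkf)
      qed
    next
      case False
      show ?thesis
      proof (rule continuous_on_cong[THEN iffD2, OF refl _ continuous_on_const])
        fix t assume "t \<in> {-\<epsilon><..<\<epsilon>}"
        show "bcoeff (\<eta>f t) k i = 0" unfolding \<eta>f_def bcoeff_mkf using False by auto
      qed
    qed
  qed
  have E0: "\<xi>f 0 = \<xi>0" "\<eta>f 0 = \<eta>0" using XI0 ETA0 x0 by (simp_all add: \<xi>f_def \<eta>f_def)
  have MAIN: "form_of_deg 2 (\<xi>f t) \<and> form_of_deg 3 (\<eta>f t) \<and>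
              (\<eta>f t)^2 + f3^2 = (f2 - bconst t * \<xi>f t) * (bconst 4 * f4 - (\<xi>f t)^2) \<and>
              psd2 (f2 - bconst t * \<xi>f t) \<and> psd2 (bconst 4 * f4 - (\<xi>f t)^2)" if t: "\<bar>t\<bar> < \<epsilon>" for t
  proof -
    have td: "\<bar>t\<bar> < \<delta>" and td2: "\<bar>t\<bar> < \<delta>2" and tm: "\<bar>t\<bar> < m/M" using t by (auto simp: \<epsilon>_def)
    have tM: "\<bar>t\<bar> * M < m" using tm M0 by (simp add: pos_less_divide_eq)
    have fx: "form_of_deg 2 (\<xi>f t)" by (simp add: \<xi>f_def form_mkf)
    have fe: "form_of_deg 3 (\<eta>f t)" by (simp add: \<eta>f_def form_mkf)
    let ?P = "f2 - bconst t * \<xi>f t"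
    let ?Q = "bconst 4 * f4 - (\<xi>f t)^2"
    have fP: "form_of_deg 2 ?P" by (intro form_diff f2f form_scale fx)
    have fQ: "form_of_deg 4 ?Q"
    proof -
      have "form_of_deg (2+2) ((\<xi>f t)^2)" by (rule form_sq[OF fx])
      then show ?thesis by (intro form_diff form_scale f4f) simp
    qed
    define R where "R = ((\<eta>f t)^2 + f3^2) - ?P * ?Q"
    have fR: "form_of_deg 6 R"
    proof -
      have a1: "form_of_deg (3+3) ((\<eta>f t)^2)" by (rule form_sq[OF fe])
      have a2: "form_of_deg (3+3) (f3^2)" by (rule form_sq[OF f3f])
      have a3: "form_of_deg (2+4) (?P * ?Q)" by (rule form_mult[OF fP fQ])
      show ?thesis using a1 a2 a3 unfolding R_def by (intro form_diff form_add) simp_all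
    qed
    have "R = 0"
    proof (rule form_zero[OF fR])
      fix j :: nat assume "j \<le> 6"
      then have g: "GG p2 p3 p4 (x t, t) (real j) = 0" using xe td by blast
      have "ev2 (\<xi>f t) 1 (real j) = xi (x t) (real j)" "ev2 (\<eta>f t) 1 (real j) = eta (x t) (real j)"
        by (simp_all add: \<xi>f_def \<eta>f_def ev2_XI ev2_ETA)
      then have "ev2 R 1 (real j) = GG p2 p3 p4 (x t, t) (real j)"
        by (simp add: R_def GG_def p2_def p3_def p4_def algebra_simps power2_eq_square power3_eq_cube)
      then show "ev2 R 1 (real j) = 0" using g by simp
    qed
    then have EQ: "(\<eta>f t)^2 + f3^2 = ?P * ?Q" by (simp add: R_def)
    have tin: "t \<in> {-\<delta><..<\<delta>}" using td by (auto simp: abs_less_iff)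
    have "dist t 0 < \<delta>2" using td2 by simp
    then have dx: "dist (x t) v0 < 1" using d2b[OF tin] x0 by simp
    have cab: "\<bar>ca (x t) i\<bar> \<le> \<bar>ca v0 i\<bar> + 1" for i
      using ca_dist[of "x t" i v0] dx by linarith
    have xib: "\<bar>ev2 (\<xi>f t) xx yy\<bar> \<le> M * (xx^2 + yy^2)" for xx yy
    proof -
      have "ev2 (\<xi>f t) xx yy = ca (x t) 0 * xx^2 + ca (x t) 1 * xx * yy + ca (x t) 2 * yy^2"
        by (simp add: \<xi>f_def ev2_mkf sum2)
      then have "\<bar>ev2 (\<xi>f t) xx yy\<bar> \<le> (\<bar>ca (x t) 0\<bar> + \<bar>ca (x t) 1\<bar> + \<bar>ca (x t) 2\<bar>) * (xx^2 + yy^2)"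
        using quad_bound by simp
      also have "\<dots> \<le> M * (xx^2 + yy^2)"
      proof (rule mult_right_mono)
        show "\<bar>ca (x t) 0\<bar> + \<bar>ca (x t) 1\<bar> + \<bar>ca (x t) 2\<bar> \<le> M"
          using cab[of 0] cab[of 1] cab[of 2] by (simp add: M_def)
      qed simp
      finally show ?thesis .
    qed
    have Plow: "ev2 ?P xx yy \<ge> (m - \<bar>t\<bar> * M) * (xx^2 + yy^2)" for xx yy
    proof -
      have "t * ev2 (\<xi>f t) xx yy \<le> \<bar>t * ev2 (\<xi>f t) xx yy\<bar>" by simp
      also have "\<dots> = \<bar>t\<bar> * \<bar>ev2 (\<xi>f t) xx yy\<bar>" by (simp add: abs_mult)
      also have "\<dots> \<le> \<bar>t\<bar> * (M * (xx^2 + yy^2))" by (rule mult_left_mono[OF xib]) simp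
      finally have "t * ev2 (\<xi>f t) xx yy \<le> \<bar>t\<bar> * M * (xx^2 + yy^2)" by (simp add: mult.assoc)
      then show ?thesis using f2m[of xx yy] by (simp add: algebra_simps)
    qed
    have Pnn: "ev2 ?P xx yy \<ge> 0" for xx yy
      using Plow[of xx yy] tM by (smt (verit) mult_nonneg_nonneg zero_le_power2)
    have Ppos: "ev2 ?P xx yy > 0" if "(xx,yy) \<noteq> (0,0)" for xx yy
    proof -
      have "xx^2 + yy^2 > 0" using that by (auto simp: sum_power2_gt_zero_iff)
      then have "(m - \<bar>t\<bar> * M) * (xx^2 + yy^2) > 0" using tM by simp
      then show ?thesis using Plow[of xx yy] by linarith
    qed
    have Qnn: "ev2 ?Q xx yy \<ge> 0" for xx yy
    proof (cases "(xx,yy) = (0,0)")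
      case True
      have "ev2 f4 0 0 = 0" by (rule form_at0[OF f4f]) simp
      moreover have "ev2 (\<xi>f t) 0 0 = 0" by (rule form_at0[OF fx]) simp
      ultimately show ?thesis using True by simp
    next
      case False
      have "ev2 ((\<eta>f t)^2 + f3^2) xx yy = ev2 ?P xx yy * ev2 ?Q xx yy" using EQ by (metis ev2_mult)
      moreover have "ev2 ((\<eta>f t)^2 + f3^2) xx yy \<ge> 0" by simp
      ultimately have "ev2 ?P xx yy * ev2 ?Q xx yy \<ge> 0" by simp
      then show ?thesis using Ppos[OF False] by (simp add: zero_le_mult_iff)
    qed
    show ?thesis using fx fe EQ Pnn Qnn by (simp add: psd2_def)
  qed
  show ?thesis
    apply (rule exI[of _ \<epsilon>])
    apply (rule conjI[OF e0])
    apply (rule exI[of _ \<xi>f])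
    apply (rule exI[of _ \<eta>f])
    using C1 C2 E0 MAIN by blast
qed

end
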